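(* Let $\mathsf{MRK}$ be the axiom scheme $\neg\forall\alpha\mathsf{P}\to\exists\alpha\mathsf{P}^\bot$ for atomic $\mathsf{P}$. (1) Every instance of $\mathsf{MRK}$ is provable in $\mathsf{HA}+\mathsf{EM}_1^-$. (2) Conversely, the rule $\mathsf{EM}_1^-$ is derivable in $\mathsf{HA}+\mathsf{MRK}$: for atomic $\mathsf{P}$ and $C$, if $\Gamma,\forall\alpha\mathsf{P}\vdash\exists\beta C$ and $\Gamma,\exists\alpha\mathsf{P}^\bot\vdash\exists\beta C$ in $\mathsf{HA}+\mathsf{MRK}$, then $\Gamma\vdash\exists\beta C$ in $\mathsf{HA}+\mathsf{MRK}$.
   Context: $\mathsf{HA}$ is intuitionistic first-order arithmetic (Heyting arithmetic, in natural deduction) over $0,\mathsf{S},+,\cdot,=$ with the Peano axioms and induction scheme; atomic formulas are decidable and $\mathsf{P}^\bot$ denotes the complementary atomic predicate of $\mathsf{P}$ (so $\mathsf{P}^\bot\equiv\neg\mathsf{P}$). $\mathsf{HA}+\mathsf{EM}_1^-$ is $\mathsf{HA}$ extended with the rule $\mathsf{EM}_1^-$: from $\Gamma,\forall\alpha\mathsf{P}\vdash\exists\beta C$ and $\Gamma,\exists\alpha\mathsf{P}^\bot\vdash\exists\beta C$, with $\mathsf{P},C$ atomic, infer $\Gamma\vdash\exists\beta C$ (discharging the two hypotheses). $\mathsf{HA}+\mathsf{MRK}$ is $\mathsf{HA}$ with the instances of $\mathsf{MRK}$ as additional axioms. *)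

theory Defs
  imports Main
begin

datatype trm = Var nat | Zero | Sc trm | Plus trm trm | Times trm trm

text \<open>Atomic formulas: Atom True s t is s = t, Atom False s t is its
complementary atomic predicate s \<noteq> t.\<close>

datatype form =
    Atom bool trm trm
  | Bot
  | And form form
  | Or form form
  | Imp form form
  | All form
  | Ex form

abbreviation Eq :: "trm \<Rightarrow> trm \<Rightarrow> form" where "Eq s t \<equiv> Atom True s t"
abbreviation Neg :: "form \<Rightarrow> form" where "Neg A \<equiv> Imp A Bot"

fun atomic :: "form \<Rightarrow> bool" where
  "atomic (Atom b s t) = True"
| "atomic _ = False"

fun compl :: "form \<Rightarrow> form" where
  "compl (Atom b s t) = Atom (\<not> b) s t"
| "compl A = A"

fun liftt :: "nat \<Rightarrow> trm \<Rightarrow> trm" where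
  "liftt k (Var i) = (if i < k then Var i else Var (Suc i))"
| "liftt k Zero = Zero"
| "liftt k (Sc t) = Sc (liftt k t)"
| "liftt k (Plus s t) = Plus (liftt k s) (liftt k t)"
| "liftt k (Times s t) = Times (liftt k s) (liftt k t)"

fun substt :: "trm \<Rightarrow> nat \<Rightarrow> trm \<Rightarrow> trm" where
  "substt (Var i) k u = (if i < k then Var i else if i = k then u else Var (i - 1))"
| "substt Zero k u = Zero"
| "substt (Sc t) k u = Sc (substt t k u)"
| "substt (Plus s t) k u = Plus (substt s k u) (substt t k u)"
| "substt (Times s t) k u = Times (substt s k u) (substt t k u)"

fun liftf :: "nat \<Rightarrow> form \<Rightarrow> form" where
  "liftf k (Atom b s t) = Atom b (liftt k s) (liftt k t)"
| "liftf k Bot = Bot"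
| "liftf k (And A B) = And (liftf k A) (liftf k B)"
| "liftf k (Or A B) = Or (liftf k A) (liftf k B)"
| "liftf k (Imp A B) = Imp (liftf k A) (liftf k B)"
| "liftf k (All A) = All (liftf (Suc k) A)"
| "liftf k (Ex A) = Ex (liftf (Suc k) A)"

fun substf :: "form \<Rightarrow> nat \<Rightarrow> trm \<Rightarrow> form" where
  "substf (Atom b s t) k u = Atom b (substt s k u) (substt t k u)"
| "substf Bot k u = Bot"
| "substf (And A B) k u = And (substf A k u) (substf B k u)"
| "substf (Or A B) k u = Or (substf A k u) (substf B k u)"
| "substf (Imp A B) k u = Imp (substf A k u) (substf B k u)"
| "substf (All A) k u = All (substf A (Suc k) (liftt 0 u))"
| "substf (Ex A) k u = Ex (substf A (Suc k) (liftt 0 u))"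

text \<open>Replace variable 0 by u, keeping the other variables unchanged.\<close>
definition inst0 :: "form \<Rightarrow> trm \<Rightarrow> form" where
  "inst0 A u = substf (liftf 1 A) 0 u"

inductive_set HA_axioms :: "form set" where
  eq_refl: "Eq t t \<in> HA_axioms"
| eq_subst: "atomic A \<Longrightarrow> Imp (Eq s t) (Imp (substf A 0 s) (substf A 0 t)) \<in> HA_axioms"
| compl1: "Imp (Atom False s t) (Neg (Atom True s t)) \<in> HA_axioms"
| compl2: "Imp (Neg (Atom True s t)) (Atom False s t) \<in> HA_axioms"
| suc_ne_zero: "Neg (Eq (Sc t) Zero) \<in> HA_axioms"
| suc_inj: "Imp (Eq (Sc s) (Sc t)) (Eq s t) \<in> HA_axioms"
| plus_0: "Eq (Plus t Zero) t \<in> HA_axioms"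
| plus_S: "Eq (Plus s (Sc t)) (Sc (Plus s t)) \<in> HA_axioms"
| times_0: "Eq (Times t Zero) Zero \<in> HA_axioms"
| times_S: "Eq (Times s (Sc t)) (Plus (Times s t) s) \<in> HA_axioms"
| induction: "Imp (substf A 0 Zero)
            (Imp (All (Imp A (inst0 A (Sc (Var 0))))) (All A)) \<in> HA_axioms"

text \<open>prv em Ax \<Gamma> A: A is derivable from hypotheses \<Gamma> in HA extended by the
additional axioms Ax, and additionally by the rule EM1^- if em is True.\<close>

inductive prv :: "bool \<Rightarrow> form set \<Rightarrow> form list \<Rightarrow> form \<Rightarrow> bool" where
  hyp: "A \<in> set \<Gamma> \<Longrightarrow> prv em Ax \<Gamma> A"
| ha_ax: "A \<in> HA_axioms \<Longrightarrow> prv em Ax \<Gamma> A"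
| ext_ax: "A \<in> Ax \<Longrightarrow> prv em Ax \<Gamma> A"
| botE: "prv em Ax \<Gamma> Bot \<Longrightarrow> prv em Ax \<Gamma> A"
| andI: "prv em Ax \<Gamma> A \<Longrightarrow> prv em Ax \<Gamma> B \<Longrightarrow> prv em Ax \<Gamma> (And A B)"
| andE1: "prv em Ax \<Gamma> (And A B) \<Longrightarrow> prv em Ax \<Gamma> A"
| andE2: "prv em Ax \<Gamma> (And A B) \<Longrightarrow> prv em Ax \<Gamma> B"
| orI1: "prv em Ax \<Gamma> A \<Longrightarrow> prv em Ax \<Gamma> (Or A B)"
| orI2: "prv em Ax \<Gamma> B \<Longrightarrow> prv em Ax \<Gamma> (Or A B)"
| orE: "prv em Ax \<Gamma> (Or A B) \<Longrightarrow> prv em Ax (A # \<Gamma>) C \<Longrightarrow> prv em Ax (B # \<Gamma>) C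
        \<Longrightarrow> prv em Ax \<Gamma> C"
| impI: "prv em Ax (A # \<Gamma>) B \<Longrightarrow> prv em Ax \<Gamma> (Imp A B)"
| impE: "prv em Ax \<Gamma> (Imp A B) \<Longrightarrow> prv em Ax \<Gamma> A \<Longrightarrow> prv em Ax \<Gamma> B"
| allI: "prv em Ax (map (liftf 0) \<Gamma>) A \<Longrightarrow> prv em Ax \<Gamma> (All A)"
| allE: "prv em Ax \<Gamma> (All A) \<Longrightarrow> prv em Ax \<Gamma> (substf A 0 t)"
| exI: "prv em Ax \<Gamma> (substf A 0 t) \<Longrightarrow> prv em Ax \<Gamma> (Ex A)"
| exE: "prv em Ax \<Gamma> (Ex A) \<Longrightarrow> prv em Ax (A # map (liftf 0) \<Gamma>) (liftf 0 C)
        \<Longrightarrow> prv em Ax \<Gamma> C"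
| em1: "em \<Longrightarrow> atomic P \<Longrightarrow> atomic C
        \<Longrightarrow> prv em Ax (All P # \<Gamma>) (Ex C) \<Longrightarrow> prv em Ax (Ex (compl P) # \<Gamma>) (Ex C)
        \<Longrightarrow> prv em Ax \<Gamma> (Ex C)"

definition MRK_inst :: "form \<Rightarrow> form" where
  "MRK_inst P = Imp (Neg (All P)) (Ex (compl P))"

definition MRK :: "form set" where
  "MRK = {MRK_inst P | P. atomic P}"

abbreviation prv_HA_EM1 :: "form list \<Rightarrow> form \<Rightarrow> bool" where
  "prv_HA_EM1 \<equiv> prv True {}"

abbreviation prv_HA_MRK :: "form list \<Rightarrow> form \<Rightarrow> bool" where
  "prv_HA_MRK \<equiv> prv False MRK"

end

theory Submission
  imports Defs
begin

lemma weaken: "prv em Ax \<Gamma> A \<Longrightarrow> set \<Gamma> \<subseteq> set \<Gamma>' \<Longrightarrow> prv em Ax \<Gamma>' A"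
proof (induction arbitrary: \<Gamma>' rule: prv.induct)
  case (hyp A \<Gamma> em Ax) then show ?case by (auto intro: prv.hyp)
next
  case (orE em Ax \<Gamma> A B C)
  have "set (A # \<Gamma>) \<subseteq> set (A # \<Gamma>')" "set (B # \<Gamma>) \<subseteq> set (B # \<Gamma>')" using orE.prems by auto
  then show ?case using orE.IH orE.prems by (blast intro: prv.orE)
next
  case (impI em Ax A \<Gamma> B)
  have "set (A # \<Gamma>) \<subseteq> set (A # \<Gamma>')" using impI.prems by auto
  then show ?case using impI.IH by (blast intro: prv.impI)
next
  case (allI em Ax \<Gamma> A)
  have "set (map (liftf 0) \<Gamma>) \<subseteq> set (map (liftf 0) \<Gamma>')" using allI.prems by auto
  then show ?case using allI.IH by (blast intro: prv.allI)
next
  case (exE em Ax \<Gamma> A C)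
  have "set (A # map (liftf 0) \<Gamma>) \<subseteq> set (A # map (liftf 0) \<Gamma>')" using exE.prems by auto
  then show ?case using exE.IH exE.prems by (blast intro: prv.exE)
next
  case (em1 em P C Ax \<Gamma>)
  have "set (All P # \<Gamma>) \<subseteq> set (All P # \<Gamma>')" "set (Ex (compl P) # \<Gamma>) \<subseteq> set (Ex (compl P) # \<Gamma>')" using em1.prems by auto
  then show ?case using em1 by (blast intro: prv.em1)
qed (auto intro: prv.intros)

lemma substt_lift: "substt (liftt (Suc 0) t) 0 (Var 0) = t"
  by (induction t) auto

lemma atomic_cases: "atomic P \<Longrightarrow> \<exists>b s t. P = Atom b s t"
  by (cases P) auto

lemma contra:
  assumes "atomic C" "prv em Ax \<Gamma> C" "prv em Ax \<Gamma> (compl C)"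
  shows "prv em Ax \<Gamma> Bot"
proof -
  obtain b s t where C: "C = Atom b s t" using atomic_cases assms(1) by blast
  have ax: "prv em Ax \<Gamma> (Imp (Atom False s t) (Neg (Atom True s t)))"
    by (rule prv.ha_ax, rule HA_axioms.compl1)
  show ?thesis
  proof (cases b)
    case True
    then show ?thesis using assms ax C by (metis compl.simps(1) prv.impE)
  next
    case False
    then show ?thesis using assms ax C by (metis compl.simps(1) prv.impE)
  qed
qed

lemma part2:
  assumes P: "atomic P" and C: "atomic C"
    and A: "prv_HA_MRK (All P # \<Gamma>) (Ex C)"
    and B: "prv_HA_MRK (Ex (compl P) # \<Gamma>) (Ex C)"
  shows "prv_HA_MRK \<Gamma> (Ex C)"
proof -
  obtain b s t where Cf: "C = Atom b s t" using atomic_cases C by blast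
  define D where "D = All (compl C)"
  have h1: "prv_HA_MRK (D # \<Gamma>) (Neg (Ex C))"
  proof (rule prv.impI)
    let ?L = "C # map (liftf 0) (Ex C # D # \<Gamma>)"
    have "prv_HA_MRK ?L (liftf 0 Bot)"
    proof -
      have "prv_HA_MRK ?L (All (liftf (Suc 0) (compl C)))"
        by (rule prv.hyp) (simp add: D_def)
      then have "prv_HA_MRK ?L (substf (liftf (Suc 0) (compl C)) 0 (Var 0))"
        by (rule prv.allE)
      then have c1: "prv_HA_MRK ?L (compl C)" using Cf by (simp add: substt_lift)
      have c2: "prv_HA_MRK ?L C" by (rule prv.hyp) simp
      show ?thesis using contra[OF C c2 c1] by simp
    qed
    then show "prv_HA_MRK (Ex C # D # \<Gamma>) Bot"
      by (rule prv.exE[rotated]) (rule prv.hyp, simp)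
  qed
  have h2: "prv_HA_MRK (D # \<Gamma>) (Neg (All P))"
  proof (rule prv.impI)
    have "prv_HA_MRK (All P # D # \<Gamma>) (Ex C)" by (rule weaken[OF A]) auto
    moreover have "prv_HA_MRK (All P # D # \<Gamma>) (Neg (Ex C))" by (rule weaken[OF h1]) auto
    ultimately show "prv_HA_MRK (All P # D # \<Gamma>) Bot" by (metis prv.impE)
  qed
  have h3: "prv_HA_MRK (D # \<Gamma>) (Ex (compl P))"
  proof (rule prv.impE[OF _ h2])
    show "prv_HA_MRK (D # \<Gamma>) (Imp (Neg (All P)) (Ex (compl P)))"
      using P by (intro prv.ext_ax) (auto simp: MRK_def MRK_inst_def)
  qed
  have "prv_HA_MRK (Ex (compl P) # D # \<Gamma>) (Ex C)" by (rule weaken[OF B]) auto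
  then have h4: "prv_HA_MRK (D # \<Gamma>) (Ex C)" by (metis prv.impI prv.impE h3)
  have h6: "prv_HA_MRK \<Gamma> (Neg D)" by (rule prv.impI, metis prv.impE h1 h4)
  have m: "prv_HA_MRK \<Gamma> (Imp (Neg D) (Ex C))"
  proof (rule prv.ext_ax)
    have "MRK_inst (compl C) = Imp (Neg D) (Ex C)" using Cf by (simp add: MRK_inst_def D_def)
    moreover have "atomic (compl C)" using Cf by simp
    ultimately show "Imp (Neg D) (Ex C) \<in> MRK" unfolding MRK_def by (metis (mono_tags, lifting) mem_Collect_eq)
  qed
  show ?thesis by (rule prv.impE[OF m h6])
qed

lemma part1:
  assumes "atomic P" shows "prv_HA_EM1 [] (MRK_inst P)"
  unfolding MRK_inst_def
proof (rule prv.impI, rule prv.em1[where P=P])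
  show "atomic (compl P)" using assms by (cases P) auto
  show "prv_HA_EM1 (All P # [Neg (All P)]) (Ex (compl P))"
  proof -
    have a: "prv_HA_EM1 (All P # [Neg (All P)]) (Neg (All P))" by (rule prv.hyp) simp
    have b: "prv_HA_EM1 (All P # [Neg (All P)]) (All P)" by (rule prv.hyp) simp
    show ?thesis by (rule prv.botE, rule prv.impE[OF a b])
  qed
  show "prv_HA_EM1 (Ex (compl P) # [Neg (All P)]) (Ex (compl P))"
    by (rule prv.hyp) simp
qed (use assms in auto)

theorem mainTheorem6:
  shows "(\<forall>P. atomic P \<longrightarrow> prv_HA_EM1 [] (MRK_inst P))
       \<and> (\<forall>\<Gamma> P C. atomic P \<longrightarrow> atomic C
            \<longrightarrow> prv_HA_MRK (All P # \<Gamma>) (Ex C)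
            \<longrightarrow> prv_HA_MRK (Ex (compl P) # \<Gamma>) (Ex C)
            \<longrightarrow> prv_HA_MRK \<Gamma> (Ex C))"
  using part1 part2 by blast

end
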